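(* Let $G$ be a connected threshold graph of order $n\ge 4$ and size $m$ with $n-1<m<\binom{n}{2}$, let $c$ be its number of type 1 vertices, $(b_1,\ldots,b_z)$ its backwards zero position sequence, $F_1=\sum_{i=1}^z b_i^2$, and $\rho$ the spectral radius of its adjacency matrix. Then \[\rho> c-1+\frac{F_1}{n^2}.\]
   Context: A threshold graph is a simple graph whose vertices can be ordered $v_1,\ldots,v_n$ so that for each $2\le i\le n$, $v_i$ is either adjacent to all of $v_1,\ldots,v_{i-1}$ (then $a_i=1$) or to none of them (then $a_i=0$); by convention $a_1=1$. Vertex $v_i$ is of type 1 if $a_i=1$ and of type 0 if $a_i=0$; $c$ and $z$ are the numbers of type 1 and type 0 vertices. The backwards zero position sequence $(b_1,\ldots,b_z)$ is defined by letting $b_i$ be the number of type 1 vertices appearing after the $i$-th type 0 vertex in the order $v_1,\ldots,v_n$. *)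

theory Defs
  imports "Jordan_Normal_Form.Spectral_Radius"
begin

definition simple_graph :: "'a set \<Rightarrow> ('a \<Rightarrow> 'a \<Rightarrow> bool) \<Rightarrow> bool" where
  "simple_graph V E \<longleftrightarrow> finite V \<and> (\<forall>x y. E x y \<longrightarrow> E y x) \<and> (\<forall>x. \<not> E x x)
     \<and> (\<forall>x y. E x y \<longrightarrow> x \<in> V \<and> y \<in> V)"

definition graph_connected :: "'a set \<Rightarrow> ('a \<Rightarrow> 'a \<Rightarrow> bool) \<Rightarrow> bool" where
  "graph_connected V E \<longleftrightarrow> (\<forall>u\<in>V. \<forall>v\<in>V. E\<^sup>*\<^sup>* u v)"

definition graph_size :: "('a \<Rightarrow> 'a \<Rightarrow> bool) \<Rightarrow> nat" where
  "graph_size E = card {{u, v} | u v. E u v}"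

text \<open>vs is a threshold ordering v_1,...,v_n (0-indexed here) of the graph.\<close>
definition threshold_order :: "'a set \<Rightarrow> ('a \<Rightarrow> 'a \<Rightarrow> bool) \<Rightarrow> 'a list \<Rightarrow> bool" where
  "threshold_order V E vs \<longleftrightarrow> distinct vs \<and> set vs = V \<and>
     (\<forall>i < length vs. 1 \<le> i \<longrightarrow>
        (\<forall>j<i. E (vs ! i) (vs ! j)) \<or> (\<forall>j<i. \<not> E (vs ! i) (vs ! j)))"

definition type1 :: "('a \<Rightarrow> 'a \<Rightarrow> bool) \<Rightarrow> 'a list \<Rightarrow> nat \<Rightarrow> bool" where
  "type1 E vs i \<longleftrightarrow> i = 0 \<or> (\<forall>j<i. E (vs ! i) (vs ! j))"

definition num_type1 :: "('a \<Rightarrow> 'a \<Rightarrow> bool) \<Rightarrow> 'a list \<Rightarrow> nat" where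
  "num_type1 E vs = card {i. i < length vs \<and> type1 E vs i}"

definition zero_positions :: "('a \<Rightarrow> 'a \<Rightarrow> bool) \<Rightarrow> 'a list \<Rightarrow> nat list" where
  "zero_positions E vs = filter (\<lambda>i. \<not> type1 E vs i) [0..<length vs]"

definition bzps :: "('a \<Rightarrow> 'a \<Rightarrow> bool) \<Rightarrow> 'a list \<Rightarrow> nat list" where
  "bzps E vs = map (\<lambda>p. card {j. p < j \<and> j < length vs \<and> type1 E vs j}) (zero_positions E vs)"

definition adj_mat :: "('a \<Rightarrow> 'a \<Rightarrow> bool) \<Rightarrow> 'a list \<Rightarrow> complex mat" where
  "adj_mat E vs = mat (length vs) (length vs) (\<lambda>(i, j). if E (vs ! i) (vs ! j) then 1 else 0)"

end

theory Submission
  imports Defs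
begin

lemma pow_mat_add: assumes A: "(A :: 'a :: semiring_1 mat) \<in> carrier_mat n n"
  shows "A ^\<^sub>m (a + b) = A ^\<^sub>m a * A ^\<^sub>m b"
proof (induct b)
  case 0 show ?case using A by simp
next
  case (Suc b)
  have "A ^\<^sub>m (a + Suc b) = (A ^\<^sub>m a * A ^\<^sub>m b) * A" using Suc by simp
  also have "\<dots> = A ^\<^sub>m a * (A ^\<^sub>m b * A)"
    using A by (intro assoc_mult_mat[of _ n n _ n _ n]) auto
  finally show ?case by simp
qed

lemma pow_mat_smult: assumes A: "(A :: 'a :: comm_ring_1 mat) \<in> carrier_mat n n"
  shows "(a \<cdot>\<^sub>m A) ^\<^sub>m k = (a ^ k) \<cdot>\<^sub>m (A ^\<^sub>m k)"
proof (induct k)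
  case 0 show ?case using A by auto
next
  case (Suc k)
  have "(a \<cdot>\<^sub>m A) ^\<^sub>m Suc k = ((a ^ k) \<cdot>\<^sub>m (A ^\<^sub>m k)) * (a \<cdot>\<^sub>m A)" using Suc by simp
  also have "\<dots> = (a ^ k) \<cdot>\<^sub>m ((A ^\<^sub>m k) * (a \<cdot>\<^sub>m A))"
    using A by (intro mult_smult_assoc_mat[of _ n n _ n]) auto
  also have "(A ^\<^sub>m k) * (a \<cdot>\<^sub>m A) = a \<cdot>\<^sub>m (A ^\<^sub>m k * A)"
    using A by (intro mult_smult_distrib[of _ n n _ n]) auto
  finally show ?case using A by (auto simp: mult.commute)
qed

lemma pow_mat_transpose_sym: assumes A: "(A :: 'a :: comm_semiring_1 mat) \<in> carrier_mat n n"
  and s: "transpose_mat A = A"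
  shows "transpose_mat (A ^\<^sub>m k) = A ^\<^sub>m k"
proof (induct k)
  case 0 show ?case using A by auto
next
  case (Suc k)
  have "transpose_mat (A ^\<^sub>m Suc k) = transpose_mat A * transpose_mat (A ^\<^sub>m k)"
    using A by (simp add: transpose_mult[of _ n n _ n])
  also have "\<dots> = A * A ^\<^sub>m k" using s Suc A by simp
  also have "\<dots> = A ^\<^sub>m k * A"
  proof -
    have 1: "A ^\<^sub>m 1 = A" using A by (simp add: left_mult_one_mat[of _ n n])
    have "A ^\<^sub>m (1 + k) = A ^\<^sub>m (k + 1)" by (simp add: add.commute)
    then show ?thesis using pow_mat_add[OF A, of 1 k] pow_mat_add[OF A, of k 1] 1 by metis
  qed
  finally show ?case by simp
qed

lemma index_mult_sum: assumes "A \<in> carrier_mat n n" "B \<in> carrier_mat n n" "i < n" "j < n"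
  shows "(A * B) $$ (i,j) = (\<Sum>l<n. A $$ (i,l) * B $$ (l,j))"
  using assms by (auto simp: scalar_prod_def atLeast0LessThan intro!: sum.cong)

lemma my_CS:
  fixes a b :: "nat \<Rightarrow> real"
  shows "(\<Sum>i\<in>I. a i * b i)^2 \<le> (\<Sum>i\<in>I. (a i)^2) * (\<Sum>i\<in>I. (b i)^2)"
proof -
  have "0 \<le> (\<Sum>i\<in>I. \<Sum>j\<in>I. (a i * b j - a j * b i)^2)" by (intro sum_nonneg) auto
  also have "\<dots> = (\<Sum>i\<in>I. \<Sum>j\<in>I. (a i)^2 * (b j)^2 + (a j)^2 * (b i)^2 - 2 * ((a i * b i) * (a j * b j)))"
    by (intro sum.cong refl) (simp add: power2_eq_square algebra_simps)
  also have "\<dots> = (\<Sum>i\<in>I. \<Sum>j\<in>I. (a i)^2 * (b j)^2) + (\<Sum>i\<in>I. \<Sum>j\<in>I. (a j)^2 * (b i)^2)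
      - 2 * (\<Sum>i\<in>I. \<Sum>j\<in>I. (a i * b i) * (a j * b j))"
    by (simp add: sum_subtractf sum.distrib sum_distrib_left)
  also have "(\<Sum>i\<in>I. \<Sum>j\<in>I. (a j)^2 * (b i)^2) = (\<Sum>i\<in>I. \<Sum>j\<in>I. (a i)^2 * (b j)^2)"
    by (rule sum.swap)
  also have "(\<Sum>i\<in>I. \<Sum>j\<in>I. (a i)^2 * (b j)^2) = (\<Sum>i\<in>I. (a i)^2) * (\<Sum>i\<in>I. (b i)^2)"
    by (simp add: sum_product)
  also have "(\<Sum>i\<in>I. \<Sum>j\<in>I. (a i * b i) * (a j * b j)) = (\<Sum>i\<in>I. a i * b i)^2"
    by (simp add: sum_product power2_eq_square)
  finally show ?thesis by simp
qed

lemma rayleigh: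
  fixes R :: "real mat" and x :: "nat \<Rightarrow> real"
  assumes R: "R \<in> carrier_mat n n"
    and sym: "transpose_mat R = R"
    and XX: "(\<Sum>i<n. x i ^ 2) > 0"
    and Qp: "(\<Sum>i<n. \<Sum>j<n. x i * R $$ (i,j) * x j) > 0"
  shows "(\<Sum>i<n. \<Sum>j<n. x i * R $$ (i,j) * x j) / (\<Sum>i<n. x i ^ 2)
     \<le> spectral_radius (map_mat complex_of_real R)"
proof (rule ccontr)
  define A where "A = map_mat complex_of_real R"
  define X where "X = (\<Sum>i<n. x i ^ 2)"
  define P where "P k i j = (R ^\<^sub>m k) $$ (i,j)" for k i j
  define Q where "Q k = (\<Sum>i<n. \<Sum>j<n. x i * P k i j * x j)" for k
  define q where "q = Q 1 / X"
  have R1: "R ^\<^sub>m 1 = R" using R by (simp add: left_mult_one_mat[of _ n n])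
  have Q1: "Q 1 = (\<Sum>i<n. \<Sum>j<n. x i * R $$ (i,j) * x j)" unfolding Q_def P_def R1 ..
  assume "\<not> ?thesis"
  then have lt: "spectral_radius A < q" unfolding q_def Q1 X_def A_def by simp
  have Xpos: "X > 0" using XX X_def by simp
  have n0: "n > 0" using XX by (cases n) auto
  have qpos: "q > 0" using Qp Xpos unfolding q_def Q1 by simp
  define q' where "q' = (max (spectral_radius A) 0 + q) / 2"
  have q'pos: "q' > 0" and q'q: "q' < q" and srq': "spectral_radius A < q'"
    using qpos lt unfolding q'_def by auto
  define B where "B = map_mat complex_of_real ((1/q') \<cdot>\<^sub>m R)"
  have Bc: "B \<in> carrier_mat n n" using R unfolding B_def by auto
  have Ac: "A \<in> carrier_mat n n" using R unfolding A_def by auto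
  have srB: "spectral_radius B < 1"
  proof -
    from spectral_radius_mem_max(1)[OF Bc n0] obtain ev where ev: "ev \<in> spectrum B"
      and evn: "spectral_radius B = norm ev" by auto
    from ev obtain v where v: "eigenvector B v ev" unfolding spectrum_def eigenvalue_def by auto
    have vc: "v \<in> carrier_vec n" and v0: "v \<noteq> 0\<^sub>v n" and Bv: "B *\<^sub>v v = ev \<cdot>\<^sub>v v"
      using v Bc unfolding eigenvector_def by auto
    have "A *\<^sub>v v = (complex_of_real q' * ev) \<cdot>\<^sub>v v"
    proof (rule eq_vecI)
      fix i assume i: "i < dim_vec ((complex_of_real q' * ev) \<cdot>\<^sub>v v)"
      then have i: "i < n" using vc by auto
      have "(B *\<^sub>v v) $ i = (ev \<cdot>\<^sub>v v) $ i" using Bv by simp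
      then have e: "(\<Sum>l = 0..<n. complex_of_real (R $$ (i, l) / q') * v $ l) = ev * v $ i"
        using i vc R unfolding B_def by (auto simp: scalar_prod_def)
      have "(A *\<^sub>v v) $ i = (\<Sum>l = 0..<n. complex_of_real (R $$ (i, l)) * v $ l)"
        using i vc R unfolding A_def by (auto simp: scalar_prod_def)
      also have "\<dots> = complex_of_real q' * (\<Sum>l = 0..<n. complex_of_real (R $$ (i, l) / q') * v $ l)"
        unfolding sum_distrib_left using q'pos
        by (intro sum.cong refl) (simp add: of_real_divide field_simps)
      also have "\<dots> = ((complex_of_real q' * ev) \<cdot>\<^sub>v v) $ i" using e i vc by simp
      finally show "(A *\<^sub>v v) $ i = ((complex_of_real q' * ev) \<cdot>\<^sub>v v) $ i" .
    qed (use vc R in \<open>auto simp: A_def\<close>)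
    then have "eigenvector A v (complex_of_real q' * ev)"
      using vc v0 Ac unfolding eigenvector_def by auto
    then have "norm (complex_of_real q' * ev) \<in> norm ` spectrum A"
      unfolding spectrum_def eigenvalue_def by auto
    from spectral_radius_mem_max(2)[OF Ac n0 this]
    have "q' * norm ev \<le> spectral_radius A" using q'pos by (simp add: norm_mult)
    then have "q' * norm ev < q' * 1" using srq' by simp
    then have "norm ev < 1" using q'pos by (simp only: mult_less_cancel_left_pos)
    then show ?thesis using evn by simp
  qed
  from spectral_radius_jnf_norm_bound_less_1_upper_triangular[OF Bc srB]
  obtain c where c: "\<And>k. norm_bound (B ^\<^sub>m k) c" by auto
  have Bpow: "B ^\<^sub>m k = map_mat complex_of_real (((1/q') ^ k) \<cdot>\<^sub>m (R ^\<^sub>m k))" for k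
  proof -
    have "B ^\<^sub>m k = map_mat complex_of_real (((1/q') \<cdot>\<^sub>m R) ^\<^sub>m k)"
      unfolding B_def by (rule of_real_hom.mat_hom_pow[symmetric]) (use R in auto)
    then show ?thesis using pow_mat_smult[OF R, of "1/q'" k] by simp
  qed
  have Pb: "\<bar>P k i j\<bar> \<le> c * q' ^ k" if i: "i < n" and j: "j < n" for k i j
  proof -
    have "norm ((B ^\<^sub>m k) $$ (i,j)) \<le> c" using c[of k] i j Bc unfolding norm_bound_def by auto
    also have "(B ^\<^sub>m k) $$ (i,j) = complex_of_real ((1/q') ^ k * P k i j)"
      unfolding Bpow P_def using i j R by simp
    finally have "\<bar>(1/q') ^ k * P k i j\<bar> \<le> c" by (simp only: norm_of_real)
    then have "(1/q') ^ k * \<bar>P k i j\<bar> \<le> c" using q'pos by (simp add: abs_mult)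
    then have "q' ^ k * ((1/q') ^ k * \<bar>P k i j\<bar>) \<le> q' ^ k * c" using q'pos
      by (intro mult_left_mono) auto
    then show ?thesis using q'pos by (simp add: power_one_over field_simps)
  qed
  define K where "K = c * (\<Sum>i<n. \<bar>x i\<bar>)^2"
  have Qup: "Q k \<le> K * q' ^ k" for k
  proof -
    have "Q k \<le> (\<Sum>i<n. \<Sum>j<n. \<bar>x i\<bar> * (c * q' ^ k) * \<bar>x j\<bar>)"
      unfolding Q_def
    proof (intro sum_mono)
      fix i j assume "i \<in> {..<n}" "j \<in> {..<n}"
      then have "\<bar>P k i j\<bar> \<le> c * q' ^ k" using Pb by auto
      then have "\<bar>x i\<bar> * \<bar>P k i j\<bar> * \<bar>x j\<bar> \<le> \<bar>x i\<bar> * (c * q' ^ k) * \<bar>x j\<bar>"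
        by (intro mult_right_mono mult_left_mono) auto
      moreover have "x i * P k i j * x j \<le> \<bar>x i\<bar> * \<bar>P k i j\<bar> * \<bar>x j\<bar>"
        by (metis abs_ge_self abs_mult)
      ultimately show "x i * P k i j * x j \<le> \<bar>x i\<bar> * (c * q' ^ k) * \<bar>x j\<bar>" by linarith
    qed
    also have "\<dots> = K * q' ^ k"
      unfolding K_def by (simp add: power2_eq_square sum_product sum_distrib_left mult_ac)
    finally show ?thesis .
  qed
  have Psym: "P k i j = P k j i" if "i < n" "j < n" for k i j
  proof -
    have "transpose_mat (R ^\<^sub>m k) $$ (i,j) = (R ^\<^sub>m k) $$ (j,i)" using that R by simp
    then show ?thesis unfolding P_def pow_mat_transpose_sym[OF R sym] by simp
  qed
  have P2: "P (m + m) i j = (\<Sum>l<n. P m i l * P m l j)" if "i < n" "j < n" for m i j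
    unfolding P_def pow_mat_add[OF R] using that R by (intro index_mult_sum) auto
  have dbl: "Q m ^ 2 \<le> X * Q (m + m)" for m
  proof -
    define y where "y l = (\<Sum>j<n. P m l j * x j)" for l
    have "Q m = (\<Sum>i<n. x i * y i)"
      unfolding Q_def y_def by (simp add: sum_distrib_left mult_ac)
    moreover have "Q (m + m) = (\<Sum>l<n. (y l)^2)"
    proof -
      have "Q (m + m) = (\<Sum>i<n. \<Sum>j<n. \<Sum>l<n. (x i * P m i l) * (P m l j * x j))"
        unfolding Q_def by (intro sum.cong refl) (simp add: P2 sum_distrib_left sum_distrib_right mult_ac)
      also have "\<dots> = (\<Sum>i<n. \<Sum>l<n. \<Sum>j<n. (x i * P m i l) * (P m l j * x j))"
        by (intro sum.cong refl sum.swap)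
      also have "\<dots> = (\<Sum>l<n. \<Sum>i<n. \<Sum>j<n. (x i * P m i l) * (P m l j * x j))"
        by (rule sum.swap)
      also have "\<dots> = (\<Sum>l<n. (\<Sum>i<n. x i * P m i l) * y l)"
        unfolding y_def by (simp add: sum_product)
      also have "\<dots> = (\<Sum>l<n. (y l)^2)"
      proof (intro sum.cong refl)
        fix l assume l: "l \<in> {..<n}"
        have "(\<Sum>i<n. x i * P m i l) = y l"
          unfolding y_def using l by (intro sum.cong refl) (auto simp: Psym mult.commute)
        then show "(\<Sum>i<n. x i * P m i l) * y l = (y l)^2" by (simp add: power2_eq_square)
      qed
      finally show ?thesis .
    qed
    ultimately show ?thesis unfolding X_def using my_CS[of x y "{..<n}"] by simp
  qed
  have growth: "q ^ (2 ^ t) * X \<le> Q (2 ^ t)" for t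
  proof (induct t)
    case 0 show ?case using Xpos unfolding q_def by simp
  next
    case (Suc t)
    have "q ^ (2 ^ Suc t) * X = (q ^ (2 ^ t) * X)^2 / X" using Xpos
      by (simp add: power2_eq_square power_add field_simps mult_2)
    also have "\<dots> \<le> Q (2 ^ t) ^ 2 / X" using Suc qpos Xpos
      by (intro divide_right_mono power_mono) auto
    also have "\<dots> \<le> Q (2 ^ t + 2 ^ t)" using dbl[of "2^t"] Xpos by (simp add: field_simps)
    finally show ?case by (simp add: mult_2)
  qed
  define r where "r = q / q'"
  have r1: "r > 1" using q'q q'pos unfolding r_def by simp
  have rb: "r ^ (2 ^ t) * X \<le> K" for t
  proof -
    have "q ^ (2 ^ t) * X \<le> K * q' ^ (2 ^ t)" using growth[of t] Qup[of "2^t"] by linarith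
    moreover have "q ^ (2 ^ t) = r ^ (2 ^ t) * q' ^ (2 ^ t)" unfolding r_def using q'pos
      by (simp add: power_divide)
    ultimately have "(r ^ (2 ^ t) * X) * q' ^ (2 ^ t) \<le> K * q' ^ (2 ^ t)" by (simp add: mult_ac)
    then show ?thesis using q'pos by simp
  qed
  obtain t :: nat where t: "K / ((r - 1) * X) < real t" using reals_Archimedean2 by blast
  have "1 + real (2 ^ t) * (r - 1) \<le> (1 + (r - 1)) ^ (2 ^ t)"
    by (rule Bernoulli_inequality) (use r1 in auto)
  then have "real (2 ^ t) * (r - 1) \<le> r ^ (2 ^ t)" by simp
  then have "real (2 ^ t) * (r - 1) * X \<le> K" using rb[of t] Xpos
    by (meson dual_order.trans mult_right_mono less_imp_le)
  moreover have "real t < real (2 ^ t)" by (simp add: less_exp)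
  moreover have "K < real t * ((r - 1) * X)" using t r1 Xpos by (simp add: field_simps)
  ultimately have "real (2 ^ t) * ((r - 1) * X) < real t * ((r - 1) * X)" by (simp add: mult_ac)
  moreover have "real t * ((r - 1) * X) \<le> real (2 ^ t) * ((r - 1) * X)"
    using \<open>real t < real (2 ^ t)\<close> r1 Xpos by (intro mult_right_mono) auto
  ultimately show False by linarith
qed

theorem corollary4p4:
  fixes V :: "'a set" and E :: "'a \<Rightarrow> 'a \<Rightarrow> bool" and vs :: "'a list"
  assumes "simple_graph V E"
    and "threshold_order V E vs"
    and "graph_connected V E"
    and "card V \<ge> 4"
    and "card V - 1 < graph_size E"
    and "graph_size E < card V choose 2"
  shows "spectral_radius (adj_mat E vs) >
           real (num_type1 E vs) - 1
           + real (\<Sum>b\<leftarrow>bzps E vs. b ^ 2) / real (card V) ^ 2"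
proof -
  note sg = assms(1)[unfolded simple_graph_def]
  note th = assms(2)[unfolded threshold_order_def]
  define n where "n = length vs"
  have cardV: "card V = n" using th distinct_card unfolding n_def by metis
  have n4: "n \<ge> 4" using assms(4) cardV by simp
  define T where "T i = type1 E vs i" for i
  have adjE: "E (vs ! i) (vs ! j) \<longleftrightarrow> i \<noteq> j \<and> ((i < j \<and> T j) \<or> (j < i \<and> T i))"
    if i: "i < n" and j: "j < n" for i j
  proof -
    have key: "E (vs ! b) (vs ! a) \<longleftrightarrow> T b" if ab: "a < b" "b < n" for a b
    proof (cases "T b")
      case True
      then show ?thesis using ab unfolding T_def type1_def by auto
    next
      case False
      then have "\<not> (\<forall>k<b. E (vs ! b) (vs ! k))" "b \<noteq> 0" unfolding T_def type1_def by auto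
      moreover have "1 \<le> b" using \<open>b \<noteq> 0\<close> by simp
      ultimately have "\<forall>k<b. \<not> E (vs ! b) (vs ! k)" using th ab unfolding n_def by blast
      then show ?thesis using ab False by auto
    qed
    show ?thesis
    proof (cases i j rule: linorder_cases)
      case less
      have "E (vs ! i) (vs ! j) \<longleftrightarrow> E (vs ! j) (vs ! i)" using sg by blast
      then show ?thesis using key[of i j] j less by auto
    next
      case equal
      then show ?thesis using sg by auto
    next
      case greater
      then show ?thesis using key[of j i] i by auto
    qed
  qed
  define bc where "bc i = card {j. i < j \<and> j < n \<and> T j}" for i
  define Ts where "Ts = {i. i < n \<and> T i}"
  define Ns where "Ns = {i. i < n \<and> \<not> T i}"
  define c where "c = card Ts"
  define F where "F = (\<Sum>i\<in>Ns. bc i ^ 2)"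
  have c_def': "num_type1 E vs = c" unfolding num_type1_def c_def Ts_def T_def n_def ..
  have F_def': "(\<Sum>b\<leftarrow>bzps E vs. b ^ 2) = F"
  proof -
    have "(\<Sum>b\<leftarrow>bzps E vs. b ^ 2) = sum_list (map (\<lambda>i. bc i ^ 2) (zero_positions E vs))"
      unfolding bzps_def bc_def T_def n_def by (simp add: comp_def)
    also have "\<dots> = sum (\<lambda>i. bc i ^ 2) (set (zero_positions E vs))"
      by (rule sum_list_distinct_conv_sum_set) (simp add: zero_positions_def)
    also have "set (zero_positions E vs) = Ns"
      unfolding zero_positions_def Ns_def T_def n_def by auto
    finally show ?thesis unfolding F_def .
  qed
  have finTs: "finite Ts" and finNs: "finite Ns" unfolding Ts_def Ns_def by auto
  have split: "{..<n} = Ts \<union> Ns" "Ts \<inter> Ns = {}" unfolding Ts_def Ns_def by auto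
  have sum_split: "(\<Sum>i<n. g i) = (\<Sum>i\<in>Ts. g i) + (\<Sum>i\<in>Ns. g i)" for g :: "nat \<Rightarrow> real"
    unfolding split(1) by (rule sum.union_disjoint[OF finTs finNs split(2)])
  have cardsum: "c + card Ns = n"
    using card_Un_disjoint[OF finTs finNs split(2)] split(1) unfolding c_def by (metis card_lessThan)
  have bc_le: "bc i \<le> n" for i
  proof -
    have "{j. i < j \<and> j < n \<and> T j} \<subseteq> {..<n}" by auto
    then show ?thesis unfolding bc_def by (metis card_lessThan card_mono finite_lessThan)
  qed
  have bc_eq: "bc i = card {j \<in> Ts. i < j}" for i
    unfolding bc_def Ts_def by (rule arg_cong[where f=card]) auto
  define x where "x i = (if T i then real n else real (bc i))" for i
  define R where "R = mat n n (\<lambda>(i,j). if E (vs ! i) (vs ! j) then 1 else (0::real))"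
  have Rc: "R \<in> carrier_mat n n" unfolding R_def by simp
  have adjR: "adj_mat E vs = map_mat complex_of_real R"
    unfolding adj_mat_def R_def n_def by (rule eq_matI) auto
  have Rsym: "transpose_mat R = R"
    unfolding R_def by (rule eq_matI) (use sg in auto)
  have XX: "(\<Sum>i<n. x i ^ 2) = real n ^ 2 * real c + real F"
  proof -
    have "(\<Sum>i\<in>Ts. x i ^ 2) = real n ^ 2 * real c"
      unfolding c_def by (simp add: x_def Ts_def)
    moreover have "(\<Sum>i\<in>Ns. x i ^ 2) = real F"
      unfolding F_def by (simp add: x_def Ns_def)
    ultimately show ?thesis using sum_split by simp
  qed
  have Q1: "(\<Sum>i<n. \<Sum>j<n. x i * R $$ (i,j) * x j)
      = real n ^ 2 * real c * (real c - 1) + 2 * real n * real F"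
  proof -
    define g where "g i j = (if i \<noteq> j \<and> ((i < j \<and> T j) \<or> (j < i \<and> T i)) then x i * x j else 0)" for i j
    have "(\<Sum>i<n. \<Sum>j<n. x i * R $$ (i,j) * x j) = (\<Sum>i<n. \<Sum>j<n. g i j)"
      by (intro sum.cong refl) (auto simp: R_def g_def adjE)
    also have "\<dots> = ((\<Sum>i\<in>Ts. \<Sum>j\<in>Ts. g i j) + (\<Sum>i\<in>Ts. \<Sum>j\<in>Ns. g i j))
        + ((\<Sum>i\<in>Ns. \<Sum>j\<in>Ts. g i j) + (\<Sum>i\<in>Ns. \<Sum>j\<in>Ns. g i j))"
      by (simp add: sum_split sum.distrib)
    also have "(\<Sum>i\<in>Ns. \<Sum>j\<in>Ns. g i j) = 0"
      by (intro sum.neutral ballI) (auto simp: g_def Ns_def)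
    also have "(\<Sum>i\<in>Ts. \<Sum>j\<in>Ts. g i j) = real n ^ 2 * real c * (real c - 1)"
    proof -
      have "(\<Sum>j\<in>Ts. g i j) = real n ^ 2 * (real c - 1)" if i: "i \<in> Ts" for i
      proof -
        have "(\<Sum>j\<in>Ts. g i j) = g i i + (\<Sum>j\<in>Ts - {i}. g i j)"
          using sum.remove[OF finTs i] .
        also have "\<dots> = (\<Sum>j\<in>Ts - {i}. real n ^ 2)"
        proof -
          have "g i i = 0" by (simp add: g_def)
          moreover have "sum (g i) (Ts - {i}) = (\<Sum>j\<in>Ts - {i}. real n ^ 2)"
            using i by (intro sum.cong refl) (auto simp: g_def Ts_def x_def power2_eq_square)
          ultimately show ?thesis by simp
        qed
        also have "\<dots> = real n ^ 2 * (real c - 1)"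
        proof -
          have "card Ts \<ge> 1" using i finTs card_gt_0_iff by (metis One_nat_def Suc_leI empty_iff)
          then show ?thesis using i finTs unfolding c_def by (simp add: card_Diff_singleton of_nat_diff)
        qed
        finally show ?thesis .
      qed
      then have "(\<Sum>i\<in>Ts. \<Sum>j\<in>Ts. g i j) = (\<Sum>i\<in>Ts. real n ^ 2 * (real c - 1))"
        by (intro sum.cong refl) auto
      then show ?thesis unfolding c_def by simp
    qed
    also have NT: "(\<Sum>i\<in>Ns. \<Sum>j\<in>Ts. g i j) = real n * real F"
    proof -
      have "(\<Sum>j\<in>Ts. g i j) = real n * real (bc i) ^ 2" if i: "i \<in> Ns" for i
      proof -
        have "(\<Sum>j\<in>Ts. g i j) = (\<Sum>j\<in>Ts. if i < j then real (bc i) * real n else 0)"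
          using i by (intro sum.cong refl) (auto simp: g_def Ts_def Ns_def x_def)
        also have "\<dots> = (\<Sum>j\<in>{j\<in>Ts. i < j}. real (bc i) * real n)"
          by (rule sum.inter_filter[symmetric, OF finTs])
        also have "\<dots> = real n * real (bc i) ^ 2"
          using bc_eq[of i] by (simp add: power2_eq_square)
        finally show ?thesis .
      qed
      then have "(\<Sum>i\<in>Ns. \<Sum>j\<in>Ts. g i j) = (\<Sum>i\<in>Ns. real n * real (bc i) ^ 2)"
        by (intro sum.cong refl) auto
      then show ?thesis unfolding F_def by (simp add: sum_distrib_left)
    qed
    also have "(\<Sum>i\<in>Ts. \<Sum>j\<in>Ns. g i j) = real n * real F"
    proof -
      have "(\<Sum>i\<in>Ts. \<Sum>j\<in>Ns. g i j) = (\<Sum>j\<in>Ns. \<Sum>i\<in>Ts. g i j)" by (rule sum.swap)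
      also have "\<dots> = (\<Sum>j\<in>Ns. \<Sum>i\<in>Ts. g j i)"
        by (intro sum.cong refl) (auto simp: g_def mult.commute)
      finally show ?thesis using NT by simp
    qed
    finally show ?thesis by simp
  qed
  have setvs: "set vs = V" using th by simp
  have inV: "\<exists>i<n. u = vs ! i" if "u \<in> V" for u
    using that setvs unfolding n_def by (metis in_set_conv_nth)
  have vsV: "vs ! i \<in> V" if "i < n" for i using that setvs unfolding n_def by auto
  have finV: "finite V" using sg by simp
  have Nne: "Ns \<noteq> {}"
  proof
    assume Ns0: "Ns = {}"
    then have allT: "T i" if "i < n" for i using that unfolding Ns_def by auto
    have Eiff: "E u v \<longleftrightarrow> u \<in> V \<and> v \<in> V \<and> u \<noteq> v" for u v
    proof
      assume "E u v" then show "u \<in> V \<and> v \<in> V \<and> u \<noteq> v" using sg by metis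
    next
      assume uv: "u \<in> V \<and> v \<in> V \<and> u \<noteq> v"
      then obtain i j where i: "i < n" "u = vs ! i" and j: "j < n" "v = vs ! j" using inV by blast
      then have "i \<noteq> j" using uv by auto
      then show "E u v" using adjE[OF i(1) j(1)] allT i j by auto
    qed
    have "{{u, v} | u v. E u v} = {B. B \<subseteq> V \<and> card B = 2}"
    proof (rule equalityI; rule subsetI)
      fix B assume "B \<in> {{u, v} | u v. E u v}"
      then obtain u v where "B = {u, v}" "E u v" by auto
      then show "B \<in> {B. B \<subseteq> V \<and> card B = 2}" using Eiff by auto
    next
      fix B assume "B \<in> {B. B \<subseteq> V \<and> card B = 2}"
      then obtain u v where "B = {u, v}" "u \<noteq> v" "B \<subseteq> V" by (auto simp: card_2_iff)
      then show "B \<in> {{u, v} | u v. E u v}" using Eiff by auto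
    qed
    then have "graph_size E = card V choose 2" unfolding graph_size_def using n_subsets[OF finV] by simp
    then show False using assms(6) by simp
  qed
  have Fpos: "F > 0"
  proof -
    obtain i where i: "i \<in> Ns" using Nne by auto
    have iN: "i < n" "\<not> T i" using i unfolding Ns_def by auto
    have "\<exists>u\<in>V. u \<noteq> vs ! i"
    proof (rule ccontr)
      assume "\<not> ?thesis"
      then have "V \<subseteq> {vs ! i}" by auto
      then have "card V \<le> card {vs ! i}" by (intro card_mono) auto
      then have "card V \<le> 1" by simp
      then show False using n4 cardV by simp
    qed
    then obtain u where u: "u \<in> V" "u \<noteq> vs ! i" by auto
    have "E\<^sup>*\<^sup>* (vs ! i) u" using assms(3) vsV[OF iN(1)] u unfolding graph_connected_def by auto
    then obtain w where w: "E (vs ! i) w" using u(2) by (metis converse_rtranclpE)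
    then have "w \<in> V" using sg by metis
    then obtain j where j: "j < n" "w = vs ! j" using inV by blast
    have "i < j \<and> T j" using adjE[OF iN(1) j(1)] w j iN(2) by auto
    then have "j \<in> {j. i < j \<and> j < n \<and> T j}" using j by auto
    moreover have "finite {j. i < j \<and> j < n \<and> T j}" by auto
    ultimately have "bc i > 0" unfolding bc_def using card_gt_0_iff by blast
    then have "bc i ^ 2 > 0" by simp
    moreover have "bc i ^ 2 \<le> F" unfolding F_def by (rule member_le_sum[OF i]) (use finNs in auto)
    ultimately show ?thesis by linarith
  qed
  have c1: "c \<ge> 1"
  proof -
    have "0 \<in> Ts" using n4 unfolding Ts_def T_def type1_def by auto
    then have "card Ts > 0" using finTs card_gt_0_iff by blast
    then show ?thesis unfolding c_def by simp
  qed
  have Fle: "F \<le> card Ns * n ^ 2"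
  proof -
    have "F \<le> (\<Sum>i\<in>Ns. n ^ 2)" unfolding F_def by (intro sum_mono power_mono bc_le) auto
    then show ?thesis by simp
  qed
  define NN where "NN = real n"
  define CC where "CC = real c"
  define FF where "FF = real F"
  have NNpos: "NN > 0" using n4 NN_def by simp
  have FFpos: "FF > 0" using Fpos FF_def by simp
  have CC1: "CC \<ge> 1" using c1 CC_def by simp
  have CCN: "CC \<le> NN" using cardsum CC_def NN_def by simp
  have FFle: "FF \<le> (NN - CC) * NN ^ 2"
  proof -
    have "real F \<le> real (card Ns * n ^ 2)" using Fle by (simp only: of_nat_le_iff)
    then have "real F \<le> real (card Ns) * real n ^ 2" by simp
    moreover have "real (card Ns) = NN - CC" using cardsum NN_def CC_def by (simp add: algebra_simps flip: of_nat_add)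
    ultimately show ?thesis unfolding FF_def NN_def by simp
  qed
  have XXv: "(\<Sum>i<n. x i ^ 2) = NN ^ 2 * CC + FF" using XX NN_def CC_def FF_def by simp
  have Q1v: "(\<Sum>i<n. \<Sum>j<n. x i * R $$ (i,j) * x j) = NN ^ 2 * CC * (CC - 1) + 2 * NN * FF"
    using Q1 NN_def CC_def FF_def by simp
  have XXpos: "NN ^ 2 * CC + FF > 0" using NNpos CC1 FFpos by (simp add: add_pos_pos)
  have Qpos: "NN ^ 2 * CC * (CC - 1) + 2 * NN * FF > 0"
    using NNpos CC1 FFpos by (intro add_nonneg_pos) auto
  have ray: "(NN ^ 2 * CC * (CC - 1) + 2 * NN * FF) / (NN ^ 2 * CC + FF) \<le> spectral_radius (adj_mat E vs)"
    using rayleigh[OF Rc Rsym, where x=x] XXv Q1v XXpos Qpos adjR by simp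
  have key: "CC - 1 + FF / NN ^ 2 < (NN ^ 2 * CC * (CC - 1) + 2 * NN * FF) / (NN ^ 2 * CC + FF)"
  proof -
    define u where "u = FF / NN ^ 2"
    have u: "u \<le> NN - CC" unfolding u_def using FFle NNpos by (simp add: field_simps)
    have Fu: "FF * u \<le> FF * (NN - CC)" using u FFpos by (intro mult_left_mono) auto
    have FFu: "FF = u * NN ^ 2" unfolding u_def using NNpos by simp
    have "(CC - 1 + u) * (NN ^ 2 * CC + FF) = NN ^ 2 * CC * (CC - 1) + (CC - 1) * FF + FF * CC + FF * u"
      using FFu by (simp add: algebra_simps)
    also have "\<dots> \<le> NN ^ 2 * CC * (CC - 1) + FF * (NN + CC - 1)" using Fu by (simp add: algebra_simps)
    also have "\<dots> < NN ^ 2 * CC * (CC - 1) + 2 * NN * FF"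
    proof -
      have "CC * FF \<le> NN * FF" using FFpos CCN by (intro mult_right_mono) auto
      moreover have "FF * (NN + CC - 1) = NN * FF + CC * FF - FF" by (simp add: algebra_simps)
      ultimately show ?thesis using FFpos by linarith
    qed
    finally have "(CC - 1 + u) * (NN ^ 2 * CC + FF) < NN ^ 2 * CC * (CC - 1) + 2 * NN * FF" .
    then show ?thesis unfolding u_def[symmetric] using XXpos by (simp add: pos_less_divide_eq)
  qed
  show ?thesis using key ray c_def' F_def' cardV unfolding NN_def CC_def FF_def by simp
qed

end
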